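(* There is a constant $C_3=C_3(N)\ge1$ such that the following holds. Let $\Omega\subset\mathbb{R}^N$ be a non-empty open set and $\Sigma\subset\mathbb{R}^N$ an $n$-dimensional submanifold. If $T>0$ and $f\in\mathcal{VT}_1^+(T)$, then $$(4\pi T)^{\frac{N-n}{2}}\int_{\Sigma\cap\Omega}f\,d\mathcal{H}^n\le C_3\,\lambda_{CM}^n[\Sigma]\int_{\mathcal{T}_{2\sqrt T}(\Omega)}f\,d\mathcal{L}^N,$$ where $\mathcal{T}_r(\Omega)=\bigcup_{p\in\Omega}B_r(p)$. In particular, $\lambda_{CM}^n[\Sigma]\le\lambda_V^n[\Sigma]\le C_3\lambda_{CM}^n[\Sigma]$.
   Context: $\lambda_{CM}^n[\Sigma]=\sup_{\rho>0,\mathbf{x}_0}(4\pi\rho)^{-n/2}\int_\Sigma e^{-|\mathbf{x}-\mathbf{x}_0|^2/(4\rho)}\,d\mathcal{H}^n$. For positive $U\in C^2(\mathbb{R}^N)$, $\tau(U)=\sup\{\tau\ge0:2\tau\nabla^2\log U+g_{\mathbb{R}}\ge0\}$; $\mathcal{VT}_1^+(T)=\{u\in C^2\cap L^1(\mathbb{R}^N):u>0,\tau(u)\ge T,\int u=1\}$; $\lambda_V^n[\Sigma]=\sup_{T>0}\sup_{U\in\mathcal{VT}_1^+(T)}(4\pi T)^{(N-n)/2}\int_\Sigma U\,d\mathcal{H}^n$. *)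

theory Defs
  imports "HOL-Analysis.Analysis"
begin

text \<open>A real-valued function is smooth on an open set S if it is (Frechet) differentiable
  at every point of S and all its directional derivatives are again smooth on S
  (greatest fixed point: derivatives of all orders exist).\<close>
coinductive smooth_real_on :: "'a::euclidean_space set \<Rightarrow> ('a \<Rightarrow> real) \<Rightarrow> bool" where
  "\<lbrakk>\<forall>x\<in>S. f differentiable (at x);
    \<forall>v. smooth_real_on S (\<lambda>x. frechet_derivative f (at x) v)\<rbrakk> \<Longrightarrow> smooth_real_on S f"

definition smooth_on :: "'a::euclidean_space set \<Rightarrow> ('a \<Rightarrow> 'b::euclidean_space) \<Rightarrow> bool" where
  "smooth_on S f \<longleftrightarrow> (\<forall>b\<in>Basis. smooth_real_on S (\<lambda>x. f x \<bullet> b))"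

definition submanifold :: "nat \<Rightarrow> 'a::euclidean_space set \<Rightarrow> bool" where
  "submanifold n \<Sigma> \<longleftrightarrow>
    (\<forall>p\<in>\<Sigma>. \<exists>U W (\<Phi>::'a\<Rightarrow>'a) \<Psi> S.
        open U \<and> p \<in> U \<and> open W \<and>
        smooth_on U \<Phi> \<and> smooth_on W \<Psi> \<and> \<Phi> ` U = W \<and>
        (\<forall>x\<in>U. \<Psi> (\<Phi> x) = x) \<and> (\<forall>y\<in>W. \<Phi> (\<Psi> y) = y) \<and>
        subspace S \<and> dim S = n \<and> \<Phi> ` (\<Sigma> \<inter> U) = W \<inter> S)"

definition C2 :: "('a::euclidean_space \<Rightarrow> real) \<Rightarrow> bool" where
  "C2 f \<longleftrightarrow> (\<forall>x. f differentiable (at x)) \<and>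
     (\<forall>v x. (\<lambda>y. frechet_derivative f (at y) v) differentiable (at x)) \<and>
     (\<forall>v w. continuous_on UNIV
        (\<lambda>y. frechet_derivative (\<lambda>z. frechet_derivative f (at z) v) (at y) w))"

definition hess_form :: "('a::euclidean_space \<Rightarrow> real) \<Rightarrow> 'a \<Rightarrow> 'a \<Rightarrow> real" where
  "hess_form f x v = frechet_derivative (\<lambda>z. frechet_derivative f (at z) v) (at x) v"

definition tau_of :: "('a::euclidean_space \<Rightarrow> real) \<Rightarrow> ereal" where
  "tau_of U = Sup {ereal t | t. t \<ge> 0 \<and>
      (\<forall>x v. 2 * t * hess_form (\<lambda>y. ln (U y)) x v + (norm v)\<^sup>2 \<ge> 0)}"

definition VT1plus :: "real \<Rightarrow> ('a::euclidean_space \<Rightarrow> real) set" where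
  "VT1plus T = {u. C2 u \<and> integrable lborel u \<and> (\<forall>x. u x > 0) \<and>
                   tau_of u \<ge> ereal T \<and> integral\<^sup>L lborel u = 1}"

definition unit_ball_vol :: "nat \<Rightarrow> real" where
  "unit_ball_vol n = pi powr (real n / 2) / Gamma (real n / 2 + 1)"

definition hausdorff_pre :: "nat \<Rightarrow> real \<Rightarrow> 'a::euclidean_space set \<Rightarrow> ennreal" where
  "hausdorff_pre n \<delta> A = (INF C \<in> {C :: nat \<Rightarrow> 'a set. A \<subseteq> (\<Union>i. C i) \<and>
        (\<forall>i. bounded (C i) \<and> diameter (C i) \<le> \<delta>)}.
      (\<Sum>i. if C i = {} then 0 else ennreal (unit_ball_vol n * (diameter (C i) / 2) ^ n)))"

definition hausdorff_outer :: "nat \<Rightarrow> 'a::euclidean_space set \<Rightarrow> ennreal" where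
  "hausdorff_outer n A = (SUP \<delta> \<in> {0<..}. hausdorff_pre n \<delta> A)"

definition hausdorff_measure :: "nat \<Rightarrow> 'a::euclidean_space measure" where
  "hausdorff_measure n = measure_of UNIV (sets borel) (hausdorff_outer n)"

definition lambda_CM :: "nat \<Rightarrow> 'a::euclidean_space set \<Rightarrow> ennreal" where
  "lambda_CM n \<Sigma> = (SUP (\<rho>, x0) \<in> {0<..} \<times> UNIV.
      ennreal ((4 * pi * \<rho>) powr (- real n / 2)) *
      (\<integral>\<^sup>+ x \<in> \<Sigma>. ennreal (exp (- (norm (x - x0))\<^sup>2 / (4 * \<rho>))) \<partial>hausdorff_measure n))"

definition lambda_V :: "nat \<Rightarrow> 'a::euclidean_space set \<Rightarrow> ennreal" where
  "lambda_V n \<Sigma> = (SUP (T, U) \<in> {(T, U). T > 0 \<and> U \<in> VT1plus T}.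
      ennreal ((4 * pi * T) powr ((real DIM('a) - real n) / 2)) *
      (\<integral>\<^sup>+ x \<in> \<Sigma>. ennreal (U x) \<partial>hausdorff_measure n))"

definition tube :: "real \<Rightarrow> 'a::metric_space set \<Rightarrow> 'a set" where
  "tube r \<Omega> = (\<Union>p\<in>\<Omega>. ball p r)"

end

theory Submission
  imports Defs "HOL-Probability.Distributions"
begin

lemma sets_hausdorff[simp, measurable_cong]: "sets (hausdorff_measure n) = sets (borel :: 'a::euclidean_space measure)"
  unfolding hausdorff_measure_def
  by (metis sets.sets_measure_of_eq space_borel)

lemma space_hausdorff[simp]: "space (hausdorff_measure n) = (UNIV :: 'a::euclidean_space set)"
  unfolding hausdorff_measure_def by (simp add: space_measure_of_conv)

lemma smooth_on_continuous:
  fixes \<Phi> :: "'a::euclidean_space \<Rightarrow> 'b::euclidean_space"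
  assumes "smooth_on U \<Phi>"
  shows "continuous_on U \<Phi>"
proof -
  have c: "continuous_on U (\<lambda>x. \<Phi> x \<bullet> b)" if "b \<in> Basis" for b
  proof -
    have "smooth_real_on U (\<lambda>x. \<Phi> x \<bullet> b)" using assms that unfolding smooth_on_def by blast
    then have "\<forall>x\<in>U. (\<lambda>x. \<Phi> x \<bullet> b) differentiable (at x)"
      by (cases rule: smooth_real_on.cases) auto
    then show ?thesis
      by (meson continuous_at_imp_continuous_on differentiable_imp_continuous_within)
  qed
  have "continuous_on U (\<lambda>x. \<Sum>b\<in>Basis. (\<Phi> x \<bullet> b) *\<^sub>R b)"
    by (intro continuous_intros c)
  then show ?thesis by (simp add: euclidean_representation)
qed

lemma submanifold_borel:
  fixes \<Sigma> :: "'a::euclidean_space set"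
  assumes "submanifold n \<Sigma>"
  shows "\<Sigma> \<in> sets borel"
proof -
  define F where "F = {U::'a set. open U \<and> \<Sigma> \<inter> U \<in> sets borel}"
  have cover: "\<Sigma> \<subseteq> \<Union>F"
  proof
    fix p assume "p \<in> \<Sigma>"
    then obtain U W and \<Phi> :: "'a \<Rightarrow> 'a" and \<Psi> S where
      U: "open U" "p \<in> U" "open W" "smooth_on U \<Phi>" "\<Phi> ` U = W"
      "\<forall>x\<in>U. \<Psi> (\<Phi> x) = x" "subspace S" "\<Phi> ` (\<Sigma> \<inter> U) = W \<inter> S"
      using assms unfolding submanifold_def by metis
    have eq: "\<Sigma> \<inter> U = U \<inter> \<Phi> -` S"
    proof
      show "\<Sigma> \<inter> U \<subseteq> U \<inter> \<Phi> -` S" using U(8) by auto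
      show "U \<inter> \<Phi> -` S \<subseteq> \<Sigma> \<inter> U"
      proof
        fix x assume x: "x \<in> U \<inter> \<Phi> -` S"
        then have "\<Phi> x \<in> W \<inter> S" using U(5) by auto
        then obtain z where z: "z \<in> \<Sigma> \<inter> U" "\<Phi> z = \<Phi> x" using U(8) by (metis imageE)
        then have "z = x" using U(6) x by (metis IntD1 IntD2)
        then show "x \<in> \<Sigma> \<inter> U" using z by simp
      qed
    qed
    have "closedin (top_of_set U) (U \<inter> \<Phi> -` S)"
      by (rule continuous_closedin_preimage[OF smooth_on_continuous[OF U(4)] closed_subspace[OF U(7)]])
    then obtain C where C: "closed C" "U \<inter> \<Phi> -` S = U \<inter> C" by (auto simp: closedin_closed)
    have "\<Sigma> \<inter> U \<in> sets borel" unfolding eq C(2) using U(1) C(1) by auto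
    then show "p \<in> \<Union>F" using U(1,2) unfolding F_def by auto
  qed
  obtain F' where F': "F' \<subseteq> F" "countable F'" "\<Union>F' = \<Union>F"
    using Lindelof[of F] unfolding F_def by auto
  have "\<Sigma> = (\<Union>U\<in>F'. \<Sigma> \<inter> U)" using cover F'(3) by auto
  also have "\<dots> \<in> sets borel"
    using F' unfolding F_def by (intro sets.countable_UN'') auto
  finally show ?thesis .
qed

lemma deriv_line:
  fixes F :: "'a::euclidean_space \<Rightarrow> real"
  assumes "F differentiable (at (x + s *\<^sub>R y))"
  shows "((\<lambda>s. F (x + s *\<^sub>R y)) has_real_derivative frechet_derivative F (at (x + s *\<^sub>R y)) y) (at s)"
proof -
  let ?D = "frechet_derivative F (at (x + s *\<^sub>R y))"
  have D: "(F has_derivative ?D) (at (x + s *\<^sub>R y))"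
    using assms frechet_derivative_works by blast
  have bl: "bounded_linear ?D" using D has_derivative_bounded_linear by blast
  have L: "((\<lambda>s. x + s *\<^sub>R y) has_derivative (\<lambda>t. t *\<^sub>R y)) (at s)"
    by (auto intro!: derivative_eq_intros)
  have "((F \<circ> (\<lambda>s. x + s *\<^sub>R y)) has_derivative (?D \<circ> (\<lambda>t. t *\<^sub>R y))) (at s)"
    by (rule diff_chain_at[OF L]) (use D in simp)
  moreover have "(?D \<circ> (\<lambda>t. t *\<^sub>R y)) = (*) (?D y)"
    using linear_cmul[OF bounded_linear.linear[OF bl]] by (auto simp: fun_eq_iff mult.commute)
  ultimately show ?thesis
    by (simp add: has_field_derivative_def comp_def)
qed

lemma VT1plusD:
  assumes "f \<in> VT1plus T"
  shows "C2 f" "integrable lborel f" "\<And>x. f x > 0" "tau_of f \<ge> ereal T" "integral\<^sup>L lborel f = 1"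
  using assms unfolding VT1plus_def by auto

lemma ln_deriv:
  fixes f :: "'a::euclidean_space \<Rightarrow> real"
  assumes "C2 f" "\<And>x. f x > 0"
  shows "frechet_derivative (\<lambda>y. ln (f y)) (at z) = (\<lambda>v. frechet_derivative f (at z) v / f z)"
    and "(\<lambda>y. ln (f y)) differentiable (at z)"
proof -
  have "f differentiable (at z)" using assms(1) unfolding C2_def by blast
  then have D: "(f has_derivative frechet_derivative f (at z)) (at z)"
    using frechet_derivative_works by blast
  have H: "((\<lambda>y. ln (f y)) has_derivative (\<lambda>v. frechet_derivative f (at z) v * inverse (f z))) (at z)"
    by (rule has_derivative_ln[OF assms(2) D])
  then show "frechet_derivative (\<lambda>y. ln (f y)) (at z) = (\<lambda>v. frechet_derivative f (at z) v / f z)"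
    using frechet_derivative_at by (metis (no_types, lifting) divide_inverse ext)
  show "(\<lambda>y. ln (f y)) differentiable (at z)" using H differentiable_def by blast
qed

lemma ln_deriv2:
  fixes f :: "'a::euclidean_space \<Rightarrow> real"
  assumes "C2 f" "\<And>x. f x > 0"
  shows "(\<lambda>z. frechet_derivative (\<lambda>y. ln (f y)) (at z) v) differentiable (at x)"
proof -
  have e: "(\<lambda>z. frechet_derivative (\<lambda>y. ln (f y)) (at z) v) = (\<lambda>z. frechet_derivative f (at z) v / f z)"
    using ln_deriv[OF assms] by auto
  have "(\<lambda>z. frechet_derivative f (at z) v) differentiable (at x)" "f differentiable (at x)"
    using assms(1) unfolding C2_def by blast+
  then show ?thesis unfolding e using assms(2)
    by (intro differentiable_divide) (auto simp: less_imp_neq[symmetric])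
qed

lemma hess_lower:
  fixes f :: "'a::euclidean_space \<Rightarrow> real"
  assumes "f \<in> VT1plus T" "T > 0"
  shows "T * hess_form (\<lambda>y. ln (f y)) z v + (norm v)\<^sup>2 \<ge> 0"
proof -
  let ?S = "{ereal t | t. t \<ge> 0 \<and> (\<forall>x v. 2 * t * hess_form (\<lambda>y. ln (f y)) x v + (norm v)\<^sup>2 \<ge> 0)}"
  have "ereal (T/2) < Sup ?S"
  proof -
    have "ereal (T/2) < ereal T" using assms(2) by simp
    also have "ereal T \<le> Sup ?S" using VT1plusD(4)[OF assms(1)] unfolding tau_of_def .
    finally show ?thesis .
  qed
  then obtain t where t: "T/2 < t" "\<forall>x v. 2 * t * hess_form (\<lambda>y. ln (f y)) x v + (norm v)\<^sup>2 \<ge> 0"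
    by (auto simp: less_Sup_iff)
  let ?H = "hess_form (\<lambda>y. ln (f y)) z v"
  have a: "2 * t * ?H + (norm v)\<^sup>2 \<ge> 0" using t(2) by blast
  show ?thesis
  proof (cases "?H \<ge> 0")
    case True then show ?thesis using assms(2) by simp
  next
    case False
    then have "T * ?H \<ge> 2 * t * ?H" using t(1) by (intro mult_right_mono_neg) auto
    then show ?thesis using a by linarith
  qed
qed

lemma log_lower:
  fixes f :: "'a::euclidean_space \<Rightarrow> real"
  assumes f: "f \<in> VT1plus T" and T: "T > 0"
  shows "ln (f (x + y)) \<ge> ln (f x) + frechet_derivative (\<lambda>y. ln (f y)) (at x) y - (norm y)\<^sup>2 / (2 * T)"
proof -
  define h where "h = (\<lambda>y. ln (f y))"
  define g where "g = (\<lambda>z. frechet_derivative h (at z) y)"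
  have C2: "C2 f" and pos: "\<And>x. f x > 0" using VT1plusD[OF f] by auto
  define c where "c = (norm y)\<^sup>2 / T"
  define p' where "p' = (\<lambda>s. g (x + s *\<^sub>R y) + s * c)"
  define p where "p = (\<lambda>s. h (x + s *\<^sub>R y) + s\<^sup>2 * c / 2)"
  have d1: "(p has_real_derivative p' s) (at s)" for s
  proof -
    have "((\<lambda>s. h (x + s *\<^sub>R y)) has_real_derivative g (x + s *\<^sub>R y)) (at s)"
      unfolding g_def h_def by (rule deriv_line) (rule ln_deriv(2)[OF C2 pos])
    then show ?thesis unfolding p_def p'_def
      by (auto intro!: derivative_eq_intros simp: power2_eq_square)
  qed
  have d2: "(p' has_real_derivative (hess_form h (x + s *\<^sub>R y) y + c)) (at s)" for s
  proof -
    have "((\<lambda>s. g (x + s *\<^sub>R y)) has_real_derivative hess_form h (x + s *\<^sub>R y) y) (at s)"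
      unfolding g_def hess_form_def h_def by (rule deriv_line) (rule ln_deriv2[OF C2 pos])
    then show ?thesis unfolding p'_def
      by (auto intro!: derivative_eq_intros)
  qed
  have nn: "hess_form h z y + c \<ge> 0" for z
  proof -
    have "T * hess_form h z y + (norm y)\<^sup>2 \<ge> 0" using hess_lower[OF f T] unfolding h_def by blast
    then have "(T * hess_form h z y + (norm y)\<^sup>2) / T \<ge> 0" using T by simp
    then show ?thesis unfolding c_def using T by (simp add: add_divide_distrib)
  qed
  have mono: "p' 0 \<le> p' s" if s0: "0 < s" for s
  proof -
    obtain z where "p' s - p' 0 = (s - 0) * (hess_form h (x + z *\<^sub>R y) y + c)"
      using MVT2[OF s0, of p' "\<lambda>z. hess_form h (x + z *\<^sub>R y) y + c"] d2 by blast
    moreover have "(s - 0) * (hess_form h (x + z *\<^sub>R y) y + c) \<ge> 0" using s0 nn by simp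
    ultimately show ?thesis by linarith
  qed
  obtain z where z: "0 < z" "z < 1" "p 1 - p 0 = (1 - 0) * p' z"
    using MVT2[of 0 1 p p'] d1 by auto
  have "p 1 - p 0 \<ge> p' 0" using z mono[of z] by simp
  then show ?thesis unfolding p_def p'_def g_def h_def c_def by (simp add: field_simps)
qed

lemma pair_lower:
  fixes f :: "'a::euclidean_space \<Rightarrow> real"
  assumes f: "f \<in> VT1plus T" and T: "T > 0" and y: "norm y < 2 * sqrt T"
  shows "f (x + y) + f (x - y) \<ge> 2 * exp (-2) * f x"
proof -
  have C2: "C2 f" and pos: "\<And>x. f x > 0" using VT1plusD[OF f] by auto
  define D where "D = frechet_derivative (\<lambda>y. ln (f y)) (at x)"
  have bl: "bounded_linear D" unfolding D_def
    using ln_deriv(2)[OF C2 pos] frechet_derivative_works has_derivative_bounded_linear by blast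
  have Dm: "D (- y) = - D y" using linear_neg[OF bounded_linear.linear[OF bl]] .
  define c where "c = (norm y)\<^sup>2 / (2 * T)"
  have c2: "c \<le> 2"
  proof -
    have "(norm y)\<^sup>2 \<le> (2 * sqrt T)\<^sup>2" using y norm_ge_zero by (intro power_mono) linarith+
    also have "\<dots> = 4 * T" using T by (simp add: power2_eq_square algebra_simps)
    finally show ?thesis unfolding c_def using T by (simp add: field_simps)
  qed
  have l1: "ln (f (x + y)) \<ge> ln (f x) + D y - c" using log_lower[OF f T, of x y] unfolding D_def c_def by simp
  have l2: "ln (f (x + - y)) \<ge> ln (f x) + D (- y) - c" using log_lower[OF f T, of x "- y"] unfolding D_def c_def by simp
  have e1: "f (x + y) \<ge> f x * exp (D y) * exp (- c)"
  proof -
    have "exp (ln (f x) + D y - c) \<le> exp (ln (f (x + y)))" using l1 by simp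
    then show ?thesis using pos by (simp add: exp_add exp_diff exp_minus field_simps)
  qed
  have e2: "f (x - y) \<ge> f x * exp (- D y) * exp (- c)"
  proof -
    have "exp (ln (f x) + D (-y) - c) \<le> exp (ln (f (x + - y)))" using l2 by simp
    then show ?thesis using pos Dm by (simp add: exp_add exp_diff exp_minus field_simps)
  qed
  have "exp (D y) + exp (- D y) \<ge> 2"
    using exp_ge_add_one_self[of "D y"] exp_ge_add_one_self[of "- D y"] by linarith
  then have "f x * (exp (D y) + exp (- D y)) * exp (- c) \<ge> f x * 2 * exp (-2)"
    using pos[of x] c2 by (intro mult_mono) auto
  then show ?thesis using e1 e2 by (simp add: algebra_simps)
qed

lemma ball_borel[measurable]: "ball (c::'a::euclidean_space) r \<in> sets borel"
  by simp

lemma lborel_translate: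
  fixes g :: "'a::euclidean_space \<Rightarrow> ennreal" and c :: real
  assumes [measurable]: "g \<in> borel_measurable borel" and c: "c = 1 \<or> c = -1"
  shows "(\<integral>\<^sup>+z. g z \<partial>lborel) = (\<integral>\<^sup>+y. g (x + c *\<^sub>R y) \<partial>lborel)"
proof -
  have c0: "c \<noteq> 0" and ac: "\<bar>c\<bar> = 1" using c by auto
  show ?thesis
    by (subst lborel_affine[OF c0, of x]) (simp add: nn_integral_density nn_integral_distr ac)
qed

lemma VT1plus_measurable:
  assumes "f \<in> VT1plus T"
  shows "f \<in> borel_measurable borel"
proof -
  have "\<forall>x. f differentiable (at x)" using VT1plusD(1)[OF assms] unfolding C2_def by blast
  then have "continuous_on UNIV f"
    by (meson continuous_at_imp_continuous_on differentiable_imp_continuous_within)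
  then show ?thesis by (rule borel_measurable_continuous_onI)
qed

lemma ball_integral_lower:
  fixes f :: "'a::euclidean_space \<Rightarrow> real"
  assumes f: "f \<in> VT1plus T" and T: "T > 0"
  shows "ennreal (f x) * emeasure lborel (ball (0::'a) (2 * sqrt T))
    \<le> ennreal (exp 2) * (\<integral>\<^sup>+z. ennreal (f z) * indicator (ball x (2 * sqrt T)) z \<partial>lborel)"
proof -
  define r where "r = 2 * sqrt T"
  have fm[measurable]: "f \<in> borel_measurable borel" by (rule VT1plus_measurable[OF f])
  have pos: "\<And>x. f x > 0" using VT1plusD[OF f] by auto
  define I where "I = (\<integral>\<^sup>+z. ennreal (f z) * indicator (ball x r) z \<partial>lborel)"
  have I1: "I = (\<integral>\<^sup>+y. ennreal (f (x + y)) * indicator (ball 0 r) y \<partial>lborel)"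
    unfolding I_def
    by (subst lborel_translate[of _ 1 x]) (auto intro!: nn_integral_cong simp: indicator_def dist_norm)
  have I2: "I = (\<integral>\<^sup>+y. ennreal (f (x - y)) * indicator (ball 0 r) y \<partial>lborel)"
    unfolding I_def
    by (subst lborel_translate[of _ "-1" x]) (auto intro!: nn_integral_cong simp: indicator_def dist_norm)
  have m1: "(\<lambda>y. ennreal (f (x + y)) * indicator (ball 0 r) y) \<in> borel_measurable lborel" by measurable
  have m2: "(\<lambda>y. ennreal (f (x - y)) * indicator (ball 0 r) y) \<in> borel_measurable lborel" by measurable
  have E: "2 * I = (\<integral>\<^sup>+y. ennreal (f (x + y)) * indicator (ball 0 r) y + ennreal (f (x - y)) * indicator (ball 0 r) y \<partial>lborel)"
    unfolding mult_2 by (rule trans[OF _ nn_integral_add[OF m1 m2, symmetric]]) (simp only: I1[symmetric] I2[symmetric])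
  have M: "(\<integral>\<^sup>+y. ennreal (2 * exp (-2) * f x) * indicator (ball (0::'a) r) y \<partial>lborel)
     \<le> (\<integral>\<^sup>+y. ennreal (f (x + y)) * indicator (ball 0 r) y + ennreal (f (x - y)) * indicator (ball 0 r) y \<partial>lborel)"
  proof (rule nn_integral_mono)
    fix y :: 'a
    show "ennreal (2 * exp (-2) * f x) * indicator (ball 0 r) y
      \<le> ennreal (f (x + y)) * indicator (ball 0 r) y + ennreal (f (x - y)) * indicator (ball 0 r) y"
    proof (cases "y \<in> ball 0 r")
      case True
      then have "norm y < 2 * sqrt T" unfolding r_def by simp
      then have "2 * exp (-2) * f x \<le> f (x + y) + f (x - y)" by (rule pair_lower[OF f T])
      then show ?thesis using True pos
        by (simp add: ennreal_plus[symmetric] less_imp_le del: ennreal_plus)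
    qed simp
  qed
  from M[folded E] have A: "ennreal (2 * exp (-2) * f x) * emeasure lborel (ball (0::'a) r) \<le> 2 * I"
    by (simp add: nn_integral_cmult_indicator)
  have "ennreal (f x) * emeasure lborel (ball (0::'a) r)
      = ennreal (exp 2 / 2) * (ennreal (2 * exp (-2) * f x) * emeasure lborel (ball (0::'a) r))"
  proof -
    have "ennreal (exp 2 / 2) * ennreal (2 * exp (-2) * f x) = ennreal (f x)"
      using pos[of x] by (simp add: ennreal_mult[symmetric] exp_minus field_simps del: ennreal_mult)
    then show ?thesis by (simp add: mult.assoc[symmetric])
  qed
  also have "\<dots> \<le> ennreal (exp 2 / 2) * (2 * I)" by (rule mult_left_mono[OF A]) simp
  also have "\<dots> = ennreal (exp 2) * I"
  proof -
    have "ennreal (exp 2 / 2) * 2 = ennreal (exp 2)"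
      using ennreal_mult[of "exp 2 / 2" 2] by simp
    then show ?thesis by (simp add: mult.assoc[symmetric])
  qed
  finally show ?thesis unfolding I_def r_def .
qed

lemma gauss_bound:
  fixes \<Sigma> :: "'a::euclidean_space set" and z :: 'a
  assumes T: "T > 0"
  shows "(\<integral>\<^sup>+x. ennreal (exp (- (norm (x - z))\<^sup>2 / (4 * T))) * indicator \<Sigma> x \<partial>hausdorff_measure n)
    \<le> ennreal ((4 * pi * T) powr (real n / 2)) * lambda_CM n \<Sigma>"
proof -
  define J where "J = (\<integral>\<^sup>+x. ennreal (exp (- (norm (x - z))\<^sup>2 / (4 * T))) * indicator \<Sigma> x \<partial>hausdorff_measure n)"
  have "ennreal ((4 * pi * T) powr (- real n / 2)) * J \<le> lambda_CM n \<Sigma>"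
    unfolding lambda_CM_def J_def
    by (rule SUP_upper2[of "(T, z)"]) (use T in auto)
  then have "ennreal ((4 * pi * T) powr (real n / 2)) * (ennreal ((4 * pi * T) powr (- real n / 2)) * J)
      \<le> ennreal ((4 * pi * T) powr (real n / 2)) * lambda_CM n \<Sigma>"
    by (rule mult_left_mono) simp
  moreover have "ennreal ((4 * pi * T) powr (real n / 2)) * ennreal ((4 * pi * T) powr (- real n / 2)) = 1"
  proof -
    have "(4 * pi * T) powr (real n / 2) * (4 * pi * T) powr (- real n / 2) = 1"
      using T by (simp add: powr_add[symmetric])
    then show ?thesis by (simp add: ennreal_mult[symmetric] del: ennreal_mult)
  qed
  ultimately show ?thesis unfolding J_def by (simp add: mult.assoc[symmetric])
qed

lemma ball_bound:
  fixes \<Sigma> :: "'a::euclidean_space set" and z :: 'a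
  assumes T: "T > 0" and S[measurable]: "\<Sigma> \<in> sets borel"
  shows "(\<integral>\<^sup>+x. indicator \<Sigma> x * indicator (ball z R) x \<partial>hausdorff_measure n)
    \<le> ennreal (exp (R\<^sup>2 / (4 * T))) * (ennreal ((4 * pi * T) powr (real n / 2)) * lambda_CM n \<Sigma>)"
proof -
  have "(\<integral>\<^sup>+x. indicator \<Sigma> x * indicator (ball z R) x \<partial>hausdorff_measure n)
     \<le> (\<integral>\<^sup>+x. ennreal (exp (R\<^sup>2 / (4 * T))) * (ennreal (exp (- (norm (x - z))\<^sup>2 / (4 * T))) * indicator \<Sigma> x) \<partial>hausdorff_measure n)"
  proof (rule nn_integral_mono)
    fix x :: 'a
    show "indicator \<Sigma> x * indicator (ball z R) x
      \<le> ennreal (exp (R\<^sup>2 / (4 * T))) * (ennreal (exp (- (norm (x - z))\<^sup>2 / (4 * T))) * indicator \<Sigma> x)"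
    proof (cases "x \<in> \<Sigma> \<and> x \<in> ball z R")
      case True
      then have "norm (x - z) < R" by (simp add: dist_norm norm_minus_commute)
      then have "(norm (x - z))\<^sup>2 \<le> R\<^sup>2" by (intro power_mono) auto
      then have "R\<^sup>2 / (4 * T) + (- (norm (x - z))\<^sup>2 / (4 * T)) \<ge> 0" using T
        by (simp add: field_simps)
      then have "1 \<le> exp (R\<^sup>2 / (4 * T)) * exp (- (norm (x - z))\<^sup>2 / (4 * T))"
        by (simp add: exp_add[symmetric])
      then have "ennreal 1 \<le> ennreal (exp (R\<^sup>2 / (4 * T)) * exp (- (norm (x - z))\<^sup>2 / (4 * T)))"
        using ennreal_leI by blast
      then show ?thesis using True by (simp add: ennreal_mult[symmetric] del: ennreal_mult)
    next
      case False then show ?thesis by (auto simp: indicator_def)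
    qed
  qed
  also have "\<dots> = ennreal (exp (R\<^sup>2 / (4 * T))) * (\<integral>\<^sup>+x. ennreal (exp (- (norm (x - z))\<^sup>2 / (4 * T))) * indicator \<Sigma> x \<partial>hausdorff_measure n)"
    by (rule nn_integral_cmult) measurable
  also have "\<dots> \<le> ennreal (exp (R\<^sup>2 / (4 * T))) * (ennreal ((4 * pi * T) powr (real n / 2)) * lambda_CM n \<Sigma>)"
    by (rule mult_left_mono[OF gauss_bound[OF T]]) simp
  finally show ?thesis .
qed

lemma sigma_finite_restr:
  fixes \<Sigma> :: "'a::euclidean_space set"
  assumes S[measurable]: "\<Sigma> \<in> sets borel" and fin: "lambda_CM n \<Sigma> < \<infinity>"
  shows "sigma_finite_measure (density (hausdorff_measure n) (indicator \<Sigma>))"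
proof
  let ?\<nu> = "density (hausdorff_measure n) (indicator \<Sigma> :: 'a \<Rightarrow> ennreal)"
  show "\<exists>A. countable A \<and> A \<subseteq> sets ?\<nu> \<and> \<Union> A = space ?\<nu> \<and> (\<forall>a\<in>A. emeasure ?\<nu> a \<noteq> \<infinity>)"
  proof (intro exI conjI)
    let ?A = "range (\<lambda>k::nat. ball (0::'a) (real k))"
    show "countable ?A" by simp
    show "?A \<subseteq> sets ?\<nu>" by auto
    show "\<Union> ?A = space ?\<nu>"
    proof -
      have "\<Union> ?A = UNIV"
      proof (safe; simp)
        fix x :: 'a
        obtain k :: nat where "norm x < real k" using reals_Archimedean2 by blast
        then show "\<exists>k::nat. norm x < real k" by blast
      qed
      then show ?thesis by simp
    qed
    show "\<forall>a\<in>?A. emeasure ?\<nu> a \<noteq> \<infinity>"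
    proof
      fix a assume "a \<in> ?A"
      then obtain k :: nat where a: "a = ball 0 (real k)" by auto
      have "emeasure ?\<nu> a = (\<integral>\<^sup>+x. indicator \<Sigma> x * indicator (ball 0 (real k)) x \<partial>hausdorff_measure n)"
        unfolding a by (subst emeasure_density) (auto simp: mult.commute)
      also have "\<dots> \<le> ennreal (exp ((real k)\<^sup>2 / (4 * 1))) * (ennreal ((4 * pi * 1) powr (real n / 2)) * lambda_CM n \<Sigma>)"
        by (rule ball_bound) auto
      also have "\<dots> < \<infinity>" using fin by (simp add: ennreal_mult_less_top)
      finally show "emeasure ?\<nu> a \<noteq> \<infinity>" by simp
    qed
  qed
qed

lemma tube_open: "open (tube r \<Omega>)"
  unfolding tube_def by auto

lemma F_measurable:
  fixes f :: "'a::euclidean_space \<Rightarrow> real"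
  assumes [measurable]: "f \<in> borel_measurable borel" and [measurable]: "B \<in> sets borel"
    and sM: "sets M = sets (borel :: 'a measure)"
  shows "(\<lambda>(x, z). ennreal c * (indicator B z * indicator (ball z r) x * ennreal (f z)))
     \<in> borel_measurable (M \<Otimes>\<^sub>M (lborel :: 'a measure))"
proof -
  have e: "(\<lambda>(x, z). ennreal c * (indicator B z * indicator (ball z r) x * ennreal (f z)))
     = (\<lambda>w. ennreal c * (indicator B (snd w) * (if dist (snd w) (fst w) < r then 1 else 0) * ennreal (f (snd w))))"
    by (rule ext) (auto simp: indicator_def split: prod.splits)
  have [measurable]: "Measurable.pred ((borel :: 'a measure) \<Otimes>\<^sub>M (borel :: 'a measure)) (\<lambda>w. dist (snd w) (fst w) < r)"
    by measurable
  have m: "(\<lambda>w. ennreal c * (indicator B (snd w) * (if dist (snd w) (fst w) < r then 1 else 0) * ennreal (f (snd w))))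
     \<in> borel_measurable ((borel :: 'a measure) \<Otimes>\<^sub>M (borel :: 'a measure))"
    by measurable
  have s: "sets (M \<Otimes>\<^sub>M (lborel :: 'a measure)) = sets ((borel :: 'a measure) \<Otimes>\<^sub>M (borel :: 'a measure))"
    by (rule sets_pair_measure_cong) (simp_all add: sM)
  show ?thesis unfolding e using m measurable_cong_sets[OF s refl] by blast
qed

lemma main_part:
  fixes \<Omega> \<Sigma> :: "'a::euclidean_space set" and f :: "'a \<Rightarrow> real"
  assumes \<Omega>: "open \<Omega>" "\<Omega> \<noteq> {}" and S: "submanifold n \<Sigma>" and T: "T > 0" and f: "f \<in> VT1plus T"
  shows "emeasure lborel (ball (0::'a) (2 * sqrt T)) * (\<integral>\<^sup>+x\<in>\<Sigma> \<inter> \<Omega>. ennreal (f x) \<partial>hausdorff_measure n)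
     \<le> ennreal (exp 3 * (4 * pi * T) powr (real n / 2)) * lambda_CM n \<Sigma> * (\<integral>\<^sup>+x\<in>tube (2 * sqrt T) \<Omega>. ennreal (f x) \<partial>lborel)"
proof -
  define r where "r = 2 * sqrt T"
  have r: "r > 0" unfolding r_def using T by simp
  have r2: "r\<^sup>2 / (4 * T) = 1" unfolding r_def using T by (simp add: power2_eq_square)
  have sS[measurable]: "\<Sigma> \<in> sets borel" by (rule submanifold_borel[OF S])
  have fm[measurable]: "f \<in> borel_measurable borel" by (rule VT1plus_measurable[OF f])
  have sO[measurable]: "\<Omega> \<in> sets borel" using \<Omega>(1) by simp
  have sTu[measurable]: "tube r \<Omega> \<in> sets borel" by (rule borel_open[OF tube_open])
  have pos: "\<And>x. f x > 0" using VT1plusD[OF f] by auto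
  define \<Lambda> where "\<Lambda> = lambda_CM n \<Sigma>"
  define P where "P = (\<integral>\<^sup>+x\<in>tube r \<Omega>. ennreal (f x) \<partial>lborel)"
  define K where "K = emeasure lborel (ball (0::'a) r)"
  define a where "a = (4 * pi * T) powr (real n / 2)"
  have K: "K = ennreal (Ball_Volume.unit_ball_vol (real DIM('a)) * r ^ DIM('a))"
    unfolding K_def using r by (simp add: emeasure_ball)
  have V: "Ball_Volume.unit_ball_vol (real DIM('a)) > 0" by (rule unit_ball_vol_pos) simp
  have V0: "Ball_Volume.unit_ball_vol (real DIM('a)) \<noteq> 0" using V by linarith
  have Kpos: "K \<noteq> 0" unfolding K using r V0 by simp
  show ?thesis
  proof (cases "\<Lambda> = \<infinity>")
    case True
    obtain p where p: "p \<in> \<Omega>" using \<Omega>(2) by blast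
    have L: "ennreal (f p) * K \<le> ennreal (exp 2) * (\<integral>\<^sup>+z. ennreal (f z) * indicator (ball p r) z \<partial>lborel)"
      unfolding K_def r_def by (rule ball_integral_lower[OF f T])
    have "ennreal (f p) * K \<noteq> 0" using pos[of p] Kpos by simp
    then have "(\<integral>\<^sup>+z. ennreal (f z) * indicator (ball p r) z \<partial>lborel) \<noteq> 0" using L by auto
    moreover have "(\<integral>\<^sup>+z. ennreal (f z) * indicator (ball p r) z \<partial>lborel) \<le> P"
      unfolding P_def
      by (intro nn_integral_mono) (auto simp: indicator_def tube_def p intro!: bexI[of _ p])
    ultimately have "P \<noteq> 0" by (auto simp: bot_unique[symmetric])
    then have "ennreal (exp 3 * a) * \<Lambda> * P = \<infinity>"
      using True T unfolding a_def by (simp add: ennreal_mult_eq_top_iff)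
    then show ?thesis unfolding a_def \<Lambda>_def P_def r_def by simp
  next
    case False
    then have fin: "\<Lambda> < \<infinity>" by (simp add: less_top)
    define \<nu> where "\<nu> = density (hausdorff_measure n) (indicator \<Sigma> :: 'a \<Rightarrow> ennreal)"
    have s\<nu>[measurable_cong]: "sets \<nu> = sets (borel :: 'a measure)" unfolding \<nu>_def by simp
    interpret \<nu>: sigma_finite_measure \<nu>
      unfolding \<nu>_def by (rule sigma_finite_restr[OF sS fin[unfolded \<Lambda>_def]])
    interpret pair_sigma_finite \<nu> lborel
      by (simp add: pair_sigma_finite_def \<nu>.sigma_finite_measure_axioms lborel.sigma_finite_measure_axioms)
    define G where "G = (\<lambda>x z. ennreal (exp 2) * (indicator (tube r \<Omega>) z * indicator (ball z r) x * ennreal (f z)))"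
    have Gm: "case_prod G \<in> borel_measurable (\<nu> \<Otimes>\<^sub>M lborel)"
      unfolding G_def by (rule F_measurable[OF fm sTu s\<nu>])
    define A where "A = (\<integral>\<^sup>+x\<in>\<Sigma> \<inter> \<Omega>. ennreal (f x) \<partial>hausdorff_measure n)"
    have A: "A = (\<integral>\<^sup>+x. ennreal (f x) * indicator \<Omega> x \<partial>\<nu>)"
      unfolding A_def \<nu>_def
      by (subst nn_integral_density) (auto intro!: nn_integral_cong simp: indicator_def)
    have "K * A = (\<integral>\<^sup>+x. K * (ennreal (f x) * indicator \<Omega> x) \<partial>\<nu>)"
      unfolding A by (rule nn_integral_cmult[symmetric]) measurable
    also have "\<dots> \<le> (\<integral>\<^sup>+x. (\<integral>\<^sup>+z. G x z \<partial>lborel) \<partial>\<nu>)"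
    proof (rule nn_integral_mono)
      fix x :: 'a
      show "K * (ennreal (f x) * indicator \<Omega> x) \<le> (\<integral>\<^sup>+z. G x z \<partial>lborel)"
      proof (cases "x \<in> \<Omega>")
        case False then show ?thesis by simp
      next
        case True
        have "K * (ennreal (f x) * indicator \<Omega> x) = ennreal (f x) * K" using True by (simp add: mult.commute)
        also have "\<dots> \<le> ennreal (exp 2) * (\<integral>\<^sup>+z. ennreal (f z) * indicator (ball x r) z \<partial>lborel)"
          unfolding K_def r_def by (rule ball_integral_lower[OF f T])
        also have "\<dots> = (\<integral>\<^sup>+z. ennreal (exp 2) * (ennreal (f z) * indicator (ball x r) z) \<partial>lborel)"
          by (rule nn_integral_cmult[symmetric]) measurable
        also have "\<dots> \<le> (\<integral>\<^sup>+z. G x z \<partial>lborel)"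
          unfolding G_def
        proof (rule nn_integral_mono)
          fix z :: 'a
          show "ennreal (exp 2) * (ennreal (f z) * indicator (ball x r) z)
            \<le> ennreal (exp 2) * (indicator (tube r \<Omega>) z * indicator (ball z r) x * ennreal (f z))"
          proof (cases "z \<in> ball x r")
            case True
            then have "z \<in> tube r \<Omega>" "x \<in> ball z r" using \<open>x \<in> \<Omega>\<close>
              by (auto simp: tube_def dist_commute)
            then show ?thesis using True by (simp add: mult.commute)
          qed simp
        qed
        finally show ?thesis .
      qed
    qed
    also have "\<dots> = (\<integral>\<^sup>+z. (\<integral>\<^sup>+x. G x z \<partial>\<nu>) \<partial>lborel)"
      by (rule Fubini'[OF Gm, symmetric])
    also have "\<dots> \<le> (\<integral>\<^sup>+z. (ennreal (exp 2) * (ennreal (exp 1) * (ennreal a * \<Lambda>))) * (ennreal (f z) * indicator (tube r \<Omega>) z) \<partial>lborel)"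
    proof (rule nn_integral_mono)
      fix z :: 'a
      have eqG: "(\<lambda>x. G x z) = (\<lambda>x. (ennreal (exp 2) * (indicator (tube r \<Omega>) z * ennreal (f z))) * indicator (ball z r) x)"
        unfolding G_def by (auto simp: fun_eq_iff mult_ac)
      have GI: "(\<integral>\<^sup>+x. G x z \<partial>\<nu>) = (ennreal (exp 2) * (indicator (tube r \<Omega>) z * ennreal (f z))) * (\<integral>\<^sup>+x. indicator (ball z r) x \<partial>\<nu>)"
        unfolding eqG by (rule nn_integral_cmult) measurable
      have "(\<integral>\<^sup>+x. indicator (ball z r) x \<partial>\<nu>) = (\<integral>\<^sup>+x. indicator \<Sigma> x * indicator (ball z r) x \<partial>hausdorff_measure n)"
        unfolding \<nu>_def by (rule nn_integral_density) measurable
      also have "\<dots> \<le> ennreal (exp (r\<^sup>2 / (4 * T))) * (ennreal ((4 * pi * T) powr (real n / 2)) * lambda_CM n \<Sigma>)"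
        by (rule ball_bound[OF T sS])
      also have "\<dots> = ennreal (exp 1) * (ennreal a * \<Lambda>)" unfolding r2 a_def \<Lambda>_def ..
      finally have I: "(\<integral>\<^sup>+x. indicator (ball z r) x \<partial>\<nu>) \<le> ennreal (exp 1) * (ennreal a * \<Lambda>)" .
      have "(\<integral>\<^sup>+x. G x z \<partial>\<nu>) \<le> (ennreal (exp 2) * (indicator (tube r \<Omega>) z * ennreal (f z))) * (ennreal (exp 1) * (ennreal a * \<Lambda>))"
        unfolding GI by (rule mult_left_mono[OF I]) simp
      then show "(\<integral>\<^sup>+x. G x z \<partial>\<nu>) \<le> (ennreal (exp 2) * (ennreal (exp 1) * (ennreal a * \<Lambda>))) * (ennreal (f z) * indicator (tube r \<Omega>) z)"
        by (simp add: mult_ac)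
    qed
    also have "\<dots> = (ennreal (exp 2) * (ennreal (exp 1) * (ennreal a * \<Lambda>))) * P"
      unfolding P_def by (rule nn_integral_cmult) measurable
    also have "\<dots> = ennreal (exp 3 * a) * \<Lambda> * P"
    proof -
      have "ennreal (exp 2) * ennreal (exp 1) * ennreal a = ennreal (exp 3 * a)"
        unfolding a_def by (simp add: ennreal_mult[symmetric] exp_add[symmetric] del: ennreal_mult)
      then show ?thesis by (simp add: mult.assoc[symmetric])
    qed
    finally show ?thesis unfolding K_def A_def a_def \<Lambda>_def P_def r_def .
  qed
qed

lemma gauss_1d:
  assumes r: "\<rho> > 0"
  shows "(\<integral>\<^sup>+t. ennreal (exp (- t\<^sup>2 / (4 * \<rho>))) \<partial>lborel) = ennreal (sqrt (4 * pi * \<rho>))"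
proof -
  define \<sigma> where "\<sigma> = sqrt (2 * \<rho>)"
  have s2: "\<sigma>\<^sup>2 = 2 * \<rho>" unfolding \<sigma>_def using r by simp
  have nd: "(\<integral>\<^sup>+t. ennreal (normal_density 0 \<sigma> t) \<partial>lborel) = 1"
  proof -
    have sp: "0 < \<sigma>" unfolding \<sigma>_def using r by simp
    show ?thesis
      using nn_integral_eq_integral[OF integrable_normal_density[OF sp, of 0] AE_I2[OF normal_density_nonneg]] integral_normal_density[OF sp, of 0] by simp
  qed
  have eq: "exp (- t\<^sup>2 / (4 * \<rho>)) = sqrt (4 * pi * \<rho>) * normal_density 0 \<sigma> t" for t
  proof -
    have "sqrt (2 * pi * \<sigma>\<^sup>2) = sqrt (4 * pi * \<rho>)" unfolding s2 by (simp add: mult_ac)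
    moreover have "sqrt (4 * pi * \<rho>) > 0" using r by simp
    ultimately show ?thesis unfolding normal_density_def s2
      using r by (simp add: field_simps)
  qed
  have "(\<integral>\<^sup>+t. ennreal (exp (- t\<^sup>2 / (4 * \<rho>))) \<partial>lborel)
      = (\<integral>\<^sup>+t. ennreal (sqrt (4 * pi * \<rho>)) * ennreal (normal_density 0 \<sigma> t) \<partial>lborel)"
    unfolding eq using r by (intro nn_integral_cong) (simp add: ennreal_mult)
  also have "\<dots> = ennreal (sqrt (4 * pi * \<rho>))"
    by (subst nn_integral_cmult) (auto simp: nd)
  finally show ?thesis .
qed

lemma gauss_nd:
  fixes x0 :: "'a::euclidean_space"
  assumes r: "\<rho> > 0"
  shows "(\<integral>\<^sup>+x. ennreal (exp (- (norm (x - x0))\<^sup>2 / (4 * \<rho>))) \<partial>lborel)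
    = ennreal ((4 * pi * \<rho>) powr (real DIM('a) / 2))"
proof -
  have "(\<integral>\<^sup>+x. ennreal (exp (- (norm (x - x0))\<^sup>2 / (4 * \<rho>))) \<partial>lborel)
      = (\<integral>\<^sup>+y. ennreal (exp (- (norm ((x0 + 1 *\<^sub>R y) - x0))\<^sup>2 / (4 * \<rho>))) \<partial>lborel)"
    by (rule lborel_translate) auto
  also have "\<dots> = (\<integral>\<^sup>+y. (\<Prod>b\<in>(Basis::'a set). ennreal (exp (- (y \<bullet> b)\<^sup>2 / (4 * \<rho>)))) \<partial>lborel)"
  proof (intro nn_integral_cong)
    fix y :: 'a
    have "(norm y)\<^sup>2 = y \<bullet> y" by (rule power2_norm_eq_inner)
    also have "\<dots> = (\<Sum>b\<in>Basis. y \<bullet> b * (y \<bullet> b))" by (rule euclidean_inner)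
    also have "\<dots> = (\<Sum>b\<in>Basis. (y \<bullet> b)\<^sup>2)" by (simp add: power2_eq_square)
    finally have "(norm y)\<^sup>2 = (\<Sum>b\<in>Basis. (y \<bullet> b)\<^sup>2)" .
    then have "exp (- (norm y)\<^sup>2 / (4 * \<rho>)) = (\<Prod>b\<in>Basis. exp (- (y \<bullet> b)\<^sup>2 / (4 * \<rho>)))"
      by (simp add: exp_sum[symmetric] sum_divide_distrib sum_negf)
    then show "ennreal (exp (- (norm ((x0 + 1 *\<^sub>R y) - x0))\<^sup>2 / (4 * \<rho>))) = (\<Prod>b\<in>Basis. ennreal (exp (- (y \<bullet> b)\<^sup>2 / (4 * \<rho>))))"
      by (simp add: prod_ennreal)
  qed
  also have "\<dots> = (\<Prod>b\<in>(Basis::'a set). (\<integral>\<^sup>+t. ennreal (exp (- t\<^sup>2 / (4 * \<rho>))) \<partial>lborel))"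
    by (rule nn_integral_lborel_prod[where f = "\<lambda>b t. ennreal (exp (- t\<^sup>2 / (4 * \<rho>)))"]) auto
  also have "\<dots> = ennreal (sqrt (4 * pi * \<rho>)) ^ DIM('a)"
    by (simp only: gauss_1d[OF r] prod_constant)
  also have "\<dots> = ennreal ((4 * pi * \<rho>) powr (real DIM('a) / 2))"
  proof -
    have "sqrt (4 * pi * \<rho>) ^ DIM('a) = (4 * pi * \<rho>) powr (real DIM('a) / 2)"
      using r by (simp add: powr_half_sqrt[symmetric] powr_realpow[symmetric] powr_powr)
    then show ?thesis using r by (subst ennreal_power) auto
  qed
  finally show ?thesis .
qed

lemma gauss_calc:
  fixes p :: "'a::euclidean_space" and c k :: real
  assumes U_def: "U = (\<lambda>x. c * exp (k * ((x - p) \<bullet> (x - p))))"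
  shows "(U has_derivative (\<lambda>v. U x * (2 * k * ((x - p) \<bullet> v)))) (at x)"
    and "((\<lambda>z. U z * (2 * k * ((z - p) \<bullet> v))) has_derivative
          (\<lambda>w. U z * (2 * k * (w \<bullet> v)) + U z * (2 * k * ((z - p) \<bullet> w)) * (2 * k * ((z - p) \<bullet> v)))) (at z)"
    and "((\<lambda>z. 2 * k * ((z - p) \<bullet> v)) has_derivative (\<lambda>w. 2 * k * (w \<bullet> v))) (at z)"
proof -
  have dQ: "((\<lambda>x. (x - p) \<bullet> (x - p)) has_derivative (\<lambda>v. 2 * ((x - p) \<bullet> v))) (at x)" for x
    by (rule has_derivative_eq_rhs, (rule derivative_intros)+) (simp add: fun_eq_iff inner_commute)
  have dL: "((\<lambda>z. 2 * k * ((z - p) \<bullet> v)) has_derivative (\<lambda>w. 2 * k * (w \<bullet> v))) (at z)" for z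
    by (rule has_derivative_eq_rhs, (rule derivative_intros)+) (simp add: fun_eq_iff inner_commute)
  show dU: "(U has_derivative (\<lambda>v. U x * (2 * k * ((x - p) \<bullet> v)))) (at x)" for x
    unfolding U_def
    by (rule has_derivative_eq_rhs, (rule derivative_intros dQ)+) (simp add: fun_eq_iff algebra_simps)
  show "((\<lambda>z. 2 * k * ((z - p) \<bullet> v)) has_derivative (\<lambda>w. 2 * k * (w \<bullet> v))) (at z)" by (rule dL)
  show "((\<lambda>z. U z * (2 * k * ((z - p) \<bullet> v))) has_derivative
          (\<lambda>w. U z * (2 * k * (w \<bullet> v)) + U z * (2 * k * ((z - p) \<bullet> w)) * (2 * k * ((z - p) \<bullet> v)))) (at z)"
    by (rule has_derivative_eq_rhs, rule has_derivative_mult[OF dU dL]) (simp add: fun_eq_iff algebra_simps)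
qed
lemma gauss_VT:
  fixes x0 :: "'a::euclidean_space"
  assumes r: "\<rho> > 0"
  defines "I \<equiv> (4 * pi * \<rho>) powr (real DIM('a) / 2)"
  shows "(\<lambda>x. exp (- (norm (x - x0))\<^sup>2 / (4 * \<rho>)) / I) \<in> VT1plus \<rho>"
proof -
  define U where "U = (\<lambda>x::'a. exp (- (norm (x - x0))\<^sup>2 / (4 * \<rho>)) / I)"
  define k where "k = - 1 / (4 * \<rho>)"
  define c where "c = 1 / I"
  have Ipos: "I > 0" unfolding I_def using r by simp
  have Ueq: "U = (\<lambda>x. c * exp (k * ((x - x0) \<bullet> (x - x0))))"
    unfolding U_def c_def k_def by (simp add: fun_eq_iff power2_norm_eq_inner)
  note gc = gauss_calc[OF Ueq]
  have dU: "(U has_derivative (\<lambda>v. U x * (2 * k * ((x - x0) \<bullet> v)))) (at x)" for x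
    by (rule gc(1))
  have fd1: "frechet_derivative U (at z) = (\<lambda>v. U z * (2 * k * ((z - x0) \<bullet> v)))" for z
    by (rule frechet_derivative_at[OF dU, symmetric])
  have Ucont: "continuous_on UNIV U"
    using dU by (meson continuous_at_imp_continuous_on differentiable_def differentiable_imp_continuous_within)
  have fd2: "frechet_derivative (\<lambda>z. frechet_derivative U (at z) v) (at y) =
      (\<lambda>w. U y * (2 * k * (w \<bullet> v)) + U y * (2 * k * ((y - x0) \<bullet> w)) * (2 * k * ((y - x0) \<bullet> v)))" for y v
    unfolding fd1 by (rule frechet_derivative_at[OF gc(2), symmetric])
  have C2: "C2 U"
    unfolding C2_def
  proof (intro conjI allI)
    show "U differentiable at x" for x using dU differentiable_def by blast
    show "(\<lambda>y. frechet_derivative U (at y) v) differentiable at x" for v x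
      unfolding fd1 using gc(2) differentiable_def by blast
    show "continuous_on UNIV (\<lambda>y. frechet_derivative (\<lambda>z. frechet_derivative U (at z) v) (at y) w)" for v w
      unfolding fd2 by (intro continuous_intros Ucont)
  qed
  have nnU: "(\<integral>\<^sup>+x. ennreal (U x) \<partial>lborel) = 1"
  proof -
    have "(\<integral>\<^sup>+x. ennreal (U x) \<partial>lborel) = (\<integral>\<^sup>+x. ennreal (1 / I) * ennreal (exp (- (norm (x - x0))\<^sup>2 / (4 * \<rho>))) \<partial>lborel)"
      unfolding U_def using Ipos by (intro nn_integral_cong) (simp add: ennreal_mult[symmetric] del: ennreal_mult)
    also have "\<dots> = ennreal (1 / I) * ennreal I"
      by (subst nn_integral_cmult) (use gauss_nd[OF r, of x0] in \<open>auto simp: I_def\<close>)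
    also have "\<dots> = 1" using Ipos by (simp add: ennreal_mult[symmetric] del: ennreal_mult)
    finally show ?thesis .
  qed
  have Um: "U \<in> borel_measurable borel" by (rule borel_measurable_continuous_onI[OF Ucont])
  have hb: "has_bochner_integral lborel U 1"
    by (rule has_bochner_integral_nn_integral) (use Um nnU Ipos in \<open>auto simp: U_def\<close>)
  have cpos: "c > 0" unfolding c_def using Ipos by simp
  have lnU: "(\<lambda>y. ln (U y)) = (\<lambda>y. ln c + k * ((y - x0) \<bullet> (y - x0)))"
    unfolding Ueq using cpos by (simp add: fun_eq_iff ln_mult)
  have dl1: "((\<lambda>y. ln (U y)) has_derivative (\<lambda>v. 2 * k * ((z - x0) \<bullet> v))) (at z)" for z
    unfolding lnU
    by (rule has_derivative_eq_rhs, (rule derivative_intros)+) (simp add: fun_eq_iff inner_commute algebra_simps)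
  have hess: "hess_form (\<lambda>y. ln (U y)) x v = 2 * k * (v \<bullet> v)" for x v
  proof -
    have "(\<lambda>z. frechet_derivative (\<lambda>y. ln (U y)) (at z) v) = (\<lambda>z. 2 * k * ((z - x0) \<bullet> v))"
      using frechet_derivative_at[OF dl1, symmetric] by (intro ext) simp
    then show ?thesis unfolding hess_form_def using frechet_derivative_at[OF gc(3), symmetric] by simp
  qed
  have tau: "tau_of U \<ge> ereal \<rho>"
    unfolding tau_of_def
  proof (rule Sup_upper, intro CollectI exI conjI allI)
    show "ereal \<rho> = ereal \<rho>" "0 \<le> \<rho>" using r by auto
    fix x v :: 'a
    have "2 * \<rho> * (2 * k) = -1" unfolding k_def using r by simp
    then have "2 * \<rho> * hess_form (\<lambda>y. ln (U y)) x v + (norm v)\<^sup>2 = 0"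
      unfolding hess power2_norm_eq_inner by (simp add: mult.assoc[symmetric])
    then show "0 \<le> 2 * \<rho> * hess_form (\<lambda>y. ln (U y)) x v + (norm v)\<^sup>2" by simp
  qed
  have hb2: "integrable lborel U" "integral\<^sup>L lborel U = 1"
    using hb unfolding has_bochner_integral_iff by auto
  have Upos: "\<forall>x. U x > 0" unfolding U_def using Ipos by simp
  have "U \<in> VT1plus \<rho>"
    unfolding VT1plus_def using C2 hb2 tau Upos by blast
  then show ?thesis unfolding U_def .
qed


definition C3c :: "'a::euclidean_space itself \<Rightarrow> real" where
  "C3c _ = max 1 (exp 3 * (4 * pi) powr (real DIM('a) / 2) / (Ball_Volume.unit_ball_vol (real DIM('a)) * 2 ^ DIM('a)))"

lemma part1:
  fixes \<Omega> \<Sigma> :: "'a::euclidean_space set" and f :: "'a \<Rightarrow> real"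
  assumes \<Omega>: "open \<Omega>" "\<Omega> \<noteq> {}" and S: "submanifold n \<Sigma>" and T: "T > 0" and f: "f \<in> VT1plus T"
  shows "ennreal ((4 * pi * T) powr ((real DIM('a) - real n) / 2)) * (\<integral>\<^sup>+ x \<in> \<Sigma> \<inter> \<Omega>. ennreal (f x) \<partial>hausdorff_measure n)
    \<le> ennreal (C3c TYPE('a)) * lambda_CM n \<Sigma> * (\<integral>\<^sup>+ x \<in> tube (2 * sqrt T) \<Omega>. ennreal (f x) \<partial>lborel)"
proof -
  define N where "N = DIM('a)"
  define V where "V = Ball_Volume.unit_ball_vol (real DIM('a))"
  define r where "r = 2 * sqrt T"
  define A where "A = (\<integral>\<^sup>+ x \<in> \<Sigma> \<inter> \<Omega>. ennreal (f x) \<partial>hausdorff_measure n)"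
  define P where "P = (\<integral>\<^sup>+ x \<in> tube (2 * sqrt T) \<Omega>. ennreal (f x) \<partial>lborel)"
  define \<Lambda> where "\<Lambda> = lambda_CM n \<Sigma>"
  define a where "a = (4 * pi * T) powr (real n / 2)"
  define b where "b = (4 * pi * T) powr ((real N - real n) / 2)"
  define k where "k = V * r ^ N"
  have V: "V > 0" unfolding V_def by (rule unit_ball_vol_pos) simp
  have r: "r > 0" unfolding r_def using T by simp
  have k: "k > 0" unfolding k_def using V r by simp
  have M: "ennreal k * A \<le> ennreal (exp 3 * a) * \<Lambda> * P"
    using main_part[OF \<Omega> S T f] r unfolding k_def A_def P_def \<Lambda>_def a_def r_def V_def N_def
    by (simp add: emeasure_ball)
  have b0: "b \<ge> 0" "a \<ge> 0" unfolding a_def b_def by simp_all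
  have "ennreal b * A = ennreal (b / k) * (ennreal k * A)"
    using k b0 by (simp add: mult.assoc[symmetric] ennreal_mult[symmetric] del: ennreal_mult)
  also have "\<dots> \<le> ennreal (b / k) * (ennreal (exp 3 * a) * \<Lambda> * P)"
    by (rule mult_left_mono[OF M]) simp
  also have "\<dots> = ennreal (b / k * (exp 3 * a)) * \<Lambda> * P"
  proof -
    have eq3: "ennreal (b / k) * ennreal (exp 3 * a) = ennreal (b / k * (exp 3 * a))"
      using k b0 by (intro ennreal_mult[symmetric]) auto
    show ?thesis by (simp only: mult.assoc[symmetric] eq3)
  qed
  also have "b / k * (exp 3 * a) = exp 3 * (4 * pi) powr (real N / 2) / (V * 2 ^ N)"
  proof -
    have ba: "b * a = (4 * pi * T) powr (real N / 2)"
      unfolding a_def b_def by (simp add: powr_add[symmetric] diff_divide_distrib)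
    have s: "sqrt T ^ N = T powr (real N / 2)"
      using T by (simp add: powr_half_sqrt[symmetric] powr_realpow[symmetric] powr_powr)
    have rN: "r ^ N = 2 ^ N * T powr (real N / 2)"
      unfolding r_def by (simp add: power_mult_distrib s)
    have "(4 * pi * T) powr (real N / 2) = (4 * pi) powr (real N / 2) * T powr (real N / 2)"
      using T by (simp add: powr_mult)
    then show ?thesis
      unfolding k_def rN using ba T V
      by (simp add: field_simps)
  qed
  also have "ennreal (exp 3 * (4 * pi) powr (real N / 2) / (V * 2 ^ N)) * \<Lambda> * P \<le> ennreal (C3c TYPE('a)) * \<Lambda> * P"
    unfolding C3c_def V_def N_def
    by (intro mult_right_mono ennreal_leI) auto
  finally show ?thesis unfolding b_def A_def P_def \<Lambda>_def N_def .
qed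

lemma CM_le_V:
  fixes \<Sigma> :: "'a::euclidean_space set"
  assumes S: "submanifold n \<Sigma>"
  shows "lambda_CM n \<Sigma> \<le> lambda_V n \<Sigma>"
  unfolding lambda_CM_def
proof (rule SUP_least, safe)
  fix \<rho> :: real and x0 :: 'a
  assume r: "\<rho> > 0"
  have sS[measurable]: "\<Sigma> \<in> sets borel" by (rule submanifold_borel[OF S])
  define I where "I = (4 * pi * \<rho>) powr (real DIM('a) / 2)"
  have Ipos: "I > 0" unfolding I_def using r by simp
  define U where "U = (\<lambda>x::'a. exp (- (norm (x - x0))\<^sup>2 / (4 * \<rho>)) / I)"
  have UV: "U \<in> VT1plus \<rho>" unfolding U_def I_def by (rule gauss_VT[OF r])
  have "ennreal ((4 * pi * \<rho>) powr ((real DIM('a) - real n) / 2)) * (\<integral>\<^sup>+ x \<in> \<Sigma>. ennreal (U x) \<partial>hausdorff_measure n)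
      \<le> lambda_V n \<Sigma>"
    unfolding lambda_V_def by (rule SUP_upper2[of "(\<rho>, U)"]) (use r UV in auto)
  moreover have "(\<integral>\<^sup>+ x \<in> \<Sigma>. ennreal (U x) \<partial>hausdorff_measure n)
      = ennreal (1 / I) * (\<integral>\<^sup>+ x \<in> \<Sigma>. ennreal (exp (- (norm (x - x0))\<^sup>2 / (4 * \<rho>))) \<partial>hausdorff_measure n)"
  proof -
    have "(\<integral>\<^sup>+ x \<in> \<Sigma>. ennreal (U x) \<partial>hausdorff_measure n)
        = (\<integral>\<^sup>+ x. ennreal (1 / I) * (ennreal (exp (- (norm (x - x0))\<^sup>2 / (4 * \<rho>))) * indicator \<Sigma> x) \<partial>hausdorff_measure n)"
    proof (intro nn_integral_cong)
      fix x :: 'a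
      have "ennreal (exp (- (norm (x - x0))\<^sup>2 / (4 * \<rho>)) / I) = ennreal (1 / I) * ennreal (exp (- (norm (x - x0))\<^sup>2 / (4 * \<rho>)))"
        using Ipos by (subst ennreal_mult[symmetric]) auto
      then show "ennreal (U x) * indicator \<Sigma> x = ennreal (1 / I) * (ennreal (exp (- (norm (x - x0))\<^sup>2 / (4 * \<rho>))) * indicator \<Sigma> x)"
        unfolding U_def by (simp only: mult.assoc)
    qed
    also have "\<dots> = ennreal (1 / I) * (\<integral>\<^sup>+ x \<in> \<Sigma>. ennreal (exp (- (norm (x - x0))\<^sup>2 / (4 * \<rho>))) \<partial>hausdorff_measure n)"
      by (rule nn_integral_cmult) measurable
    finally show ?thesis .
  qed
  moreover have "ennreal ((4 * pi * \<rho>) powr ((real DIM('a) - real n) / 2)) * ennreal (1 / I)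
      = ennreal ((4 * pi * \<rho>) powr (- real n / 2))"
  proof -
    have "(4 * pi * \<rho>) powr ((real DIM('a) - real n) / 2) * (1 / I) = (4 * pi * \<rho>) powr (- real n / 2)"
      unfolding I_def using r by (simp add: powr_diff[symmetric] diff_divide_distrib)
    then show ?thesis using Ipos by (simp add: ennreal_mult[symmetric] del: ennreal_mult)
  qed
  ultimately show "ennreal ((4 * pi * \<rho>) powr (- real n / 2)) *
      (\<integral>\<^sup>+ x \<in> \<Sigma>. ennreal (exp (- (norm (x - x0))\<^sup>2 / (4 * \<rho>))) \<partial>hausdorff_measure n) \<le> lambda_V n \<Sigma>"
    by (simp add: mult.assoc[symmetric])
qed

lemma V_le_CM:
  fixes \<Sigma> :: "'a::euclidean_space set"
  assumes S: "submanifold n \<Sigma>"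
  shows "lambda_V n \<Sigma> \<le> ennreal (C3c TYPE('a)) * lambda_CM n \<Sigma>"
  unfolding lambda_V_def
proof (rule SUP_least, safe)
  fix T :: real and U :: "'a \<Rightarrow> real"
  assume T: "T > 0" and U: "U \<in> VT1plus T"
  have tU: "tube (2 * sqrt T) (UNIV :: 'a set) = UNIV"
    unfolding tube_def using T by (auto intro!: bexI)
  have one: "(\<integral>\<^sup>+ x \<in> (UNIV :: 'a set). ennreal (U x) \<partial>lborel) = 1"
    using nn_integral_eq_integral[OF VT1plusD(2)[OF U]] VT1plusD(3,5)[OF U] less_imp_le by auto
  have "ennreal ((4 * pi * T) powr ((real DIM('a) - real n) / 2)) * (\<integral>\<^sup>+ x \<in> \<Sigma> \<inter> UNIV. ennreal (U x) \<partial>hausdorff_measure n)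
      \<le> ennreal (C3c TYPE('a)) * lambda_CM n \<Sigma> * (\<integral>\<^sup>+ x \<in> tube (2 * sqrt T) UNIV. ennreal (U x) \<partial>lborel)"
    by (rule part1[OF open_UNIV UNIV_not_empty S T U])
  then show "ennreal ((4 * pi * T) powr ((real DIM('a) - real n) / 2)) *
      (\<integral>\<^sup>+ x \<in> \<Sigma>. ennreal (U x) \<partial>hausdorff_measure n) \<le> ennreal (C3c TYPE('a)) * lambda_CM n \<Sigma>"
    unfolding tU one by simp
qed

theorem mainTheorem8:
  "\<exists>C3::real. C3 \<ge> 1 \<and>
     (\<forall>(\<Omega>::'a::euclidean_space set) (\<Sigma>::'a set) (n::nat) (T::real) f.
        open \<Omega> \<and> \<Omega> \<noteq> {} \<and> submanifold n \<Sigma> \<and> T > 0 \<and> f \<in> VT1plus T \<longrightarrow>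
        ennreal ((4 * pi * T) powr ((real DIM('a) - real n) / 2)) *
          (\<integral>\<^sup>+ x \<in> \<Sigma> \<inter> \<Omega>. ennreal (f x) \<partial>hausdorff_measure n)
        \<le> ennreal C3 * lambda_CM n \<Sigma> *
          (\<integral>\<^sup>+ x \<in> tube (2 * sqrt T) \<Omega>. ennreal (f x) \<partial>lborel)) \<and>
     (\<forall>(\<Sigma>::'a set) (n::nat). submanifold n \<Sigma> \<longrightarrow>
        lambda_CM n \<Sigma> \<le> lambda_V n \<Sigma> \<and> lambda_V n \<Sigma> \<le> ennreal C3 * lambda_CM n \<Sigma>)"
proof (intro exI[of _ "C3c TYPE('a)"] conjI allI impI)
  show "1 \<le> C3c TYPE('a)" unfolding C3c_def by simp
next
  fix \<Omega> \<Sigma> :: "'a set" and n :: nat and T :: real and f :: "'a \<Rightarrow> real"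
  assume "open \<Omega> \<and> \<Omega> \<noteq> {} \<and> submanifold n \<Sigma> \<and> T > 0 \<and> f \<in> VT1plus T"
  then show "ennreal ((4 * pi * T) powr ((real DIM('a) - real n) / 2)) *
          (\<integral>\<^sup>+ x \<in> \<Sigma> \<inter> \<Omega>. ennreal (f x) \<partial>hausdorff_measure n)
        \<le> ennreal (C3c TYPE('a)) * lambda_CM n \<Sigma> *
          (\<integral>\<^sup>+ x \<in> tube (2 * sqrt T) \<Omega>. ennreal (f x) \<partial>lborel)"
    using part1 by blast
next
  fix \<Sigma> :: "'a set" and n :: nat
  assume S: "submanifold n \<Sigma>"
  show "lambda_CM n \<Sigma> \<le> lambda_V n \<Sigma>" by (rule CM_le_V[OF S])
  show "lambda_V n \<Sigma> \<le> ennreal (C3c TYPE('a)) * lambda_CM n \<Sigma>" by (rule V_le_CM[OF S])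
qed

end
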